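(* Let $u_1,\dots,u_n$ be words over $[n]$ with $u_j\in[n]^{k_j}$ ($k_j\geq0$). Then \[ \Pi\left(\begin{bmatrix}e_{u_1}\\ \vdots\\ e_{u_n}\end{bmatrix}\right)=\sum_{j=1}^n\left(e_{u_j}\otimes f_j-\frac{\delta^l(l_{ju_j})[1\oplus\cdots\oplus1]}{k_j+1}\right), \] where $ju_j$ denotes the word obtained by prefixing the letter $j$ to $u_j$.
   Context: Let $\{e_1,\dots,e_n\}$ be an orthonormal basis of $\mathbb{C}^n$, $\{f_1,\dots,f_n\}$ the standard basis. The full Fock space is $\mathcal{F}(\mathbb{C}^n)=\mathbb{C}1\oplus\bigoplus_{k\geq1}(\mathbb{C}^n)^{\otimes k}$; for a word $w=i_1\cdots i_k$ over $[n]=\{1,\dots,n\}$, $e_w=e_{i_1}\otimes\cdots\otimes e_{i_k}$, $e_\epsilon=1$; $[n]^k$ is the set of words of length $k$. Let $l_je_w=e_{jw}$, $l_u=l_{u_1}\cdots l_{u_p}$ for $u=u_1\cdots u_p$, $s_j=l_j+l_j^*$. Let $\mathbb{C}^l_{\langle n\rangle}$ (resp. $\mathbb{C}^s_{\langle n\rangle}$) be the unital algebra generated by $l_1,\dots,l_n$ (resp. $s_1,\dots,s_n$), and $\delta^l$ (resp. $\delta^s$) the cyclic gradient: the linear map into $n$-tuples ($\cong$ algebra $\otimes\,\mathbb{C}^n$) with $\delta^l(l_{i_1}\cdots l_{i_p})=\sum_{j=1}^p l_{i_{j+1}}\cdots l_{i_p}l_{i_1}\cdots l_{i_{j-1}}\otimes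 f_{i_j}$ (resp. the same with $s$ in place of $l$). For a tuple $(x_1,\dots,x_n)$ of operators, $(x_1,\dots,x_n)[1\oplus\cdots\oplus1]=(x_11,\dots,x_n1)\in\mathcal{F}(\mathbb{C}^n)^n$. The free Leray projection $\Pi$ (on the Fock space side) is the orthogonal projection of $\mathcal{F}(\mathbb{C}^n)^n$ onto $\mathcal{F}(\mathbb{C}^n)^n\ominus\overline{\delta^s(\mathbb{C}^s_{\langle n\rangle})[1\oplus\cdots\oplus1]}$, the closure of the image on the vacuum of the free divergence-free vector field; here $\delta^s(\mathbb{C}^s_{\langle n\rangle})[1\oplus\cdots\oplus1]=\delta^l(\mathbb{C}^l_{\langle n\rangle})[1\oplus\cdots\oplus1]$. Vectors of $\mathcal{F}(\mathbb{C}^n)^n$ are identified with $\mathcal{F}(\mathbb{C}^n)\otimes\mathbb{C}^n$ via $(\xi_1,\dots,\xi_n)\mapsto\sum_j\xi_j\otimes f_j$. *)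

theory Defs
  imports "HOL-Analysis.Analysis"
begin

text \<open>A vector of F(C^n)^n = F(C^n) (x) C^n is a function on
  index pairs (w, j) (coefficient of e_w (x) f_j), supported on valid pairs and square summable.\<close>

definition is_word :: "nat \<Rightarrow> nat list \<Rightarrow> bool" where
  "is_word n w \<longleftrightarrow> set w \<subseteq> {1..n}"

definition valid_idx :: "nat \<Rightarrow> nat list \<times> nat \<Rightarrow> bool" where
  "valid_idx n k \<longleftrightarrow> is_word n (fst k) \<and> snd k \<in> {1..n}"

definition fockn :: "nat \<Rightarrow> (nat list \<times> nat \<Rightarrow> complex) set" where
  "fockn n = {x. (\<forall>k. x k \<noteq> 0 \<longrightarrow> valid_idx n k) \<and> (\<lambda>k. (cmod (x k))\<^sup>2) summable_on UNIV}"

definition finner :: "(nat list \<times> nat \<Rightarrow> complex) \<Rightarrow> (nat list \<times> nat \<Rightarrow> complex) \<Rightarrow> complex" where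
  "finner x y = infsum (\<lambda>k. x k * cnj (y k)) UNIV"

definition fnorm :: "(nat list \<times> nat \<Rightarrow> complex) \<Rightarrow> real" where
  "fnorm x = sqrt (infsum (\<lambda>k. (cmod (x k))\<^sup>2) UNIV)"

definition bvec :: "nat list \<Rightarrow> nat \<Rightarrow> nat list \<times> nat \<Rightarrow> complex" where
  "bvec w j = (\<lambda>k. if k = (w, j) then 1 else 0)"

text \<open>delta^l(l_v)[1 (+) ... (+) 1] for a word v = i_1 ... i_p:
  sum over positions j of e_{i_{j+1} ... i_p i_1 ... i_{j-1}} (x) f_{i_j}
  (0-based position j below).\<close>
definition delta_vac :: "nat list \<Rightarrow> nat list \<times> nat \<Rightarrow> complex" where
  "delta_vac v = (\<lambda>k. \<Sum>j<length v. bvec (drop (Suc j) v @ take j v) (v ! j) k)"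

definition delta_span :: "nat \<Rightarrow> (nat list \<times> nat \<Rightarrow> complex) set" where
  "delta_span n = {x. \<exists>U c. finite U \<and> (\<forall>u\<in>U. is_word n u) \<and>
                       x = (\<lambda>k. \<Sum>u\<in>U. c u * delta_vac u k)}"

definition fclosure :: "nat \<Rightarrow> (nat list \<times> nat \<Rightarrow> complex) set \<Rightarrow> (nat list \<times> nat \<Rightarrow> complex) set" where
  "fclosure n S = {x \<in> fockn n. \<forall>\<epsilon>>0. \<exists>z\<in>S. fnorm (\<lambda>k. x k - z k) < \<epsilon>}"

definition orth_compl :: "nat \<Rightarrow> (nat list \<times> nat \<Rightarrow> complex) set \<Rightarrow> (nat list \<times> nat \<Rightarrow> complex) set" where
  "orth_compl n S = {y \<in> fockn n. \<forall>z\<in>S. finner y z = 0}"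

definition orth_proj :: "(nat list \<times> nat \<Rightarrow> complex) set \<Rightarrow> (nat list \<times> nat \<Rightarrow> complex) \<Rightarrow> (nat list \<times> nat \<Rightarrow> complex)" where
  "orth_proj V x = (THE y. y \<in> V \<and> (\<forall>v\<in>V. finner (\<lambda>k. x k - y k) v = 0))"

definition leray :: "nat \<Rightarrow> (nat list \<times> nat \<Rightarrow> complex) \<Rightarrow> (nat list \<times> nat \<Rightarrow> complex)" where
  "leray n = orth_proj (orth_compl n (fclosure n (delta_span n)))"

end

theory Submission imports Defs begin

lemma t1: "((a::real) + b)\<^sup>2 \<le> 2 * a\<^sup>2 + 2 * b\<^sup>2"
proof -
  have "0 \<le> (a - b)\<^sup>2" by simp
  then show ?thesis by (simp add: power2_diff power2_sum)
qed
lemma t2: "0 \<le> (a::real) \<Longrightarrow> 0 \<le> b \<Longrightarrow> a * b \<le> a\<^sup>2 + b\<^sup>2"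
proof -
  assume "0 \<le> a" "0 \<le> b"
  hence "0 \<le> a * b" by simp
  moreover have "0 \<le> (a - b)\<^sup>2" by simp
  ultimately show ?thesis by (simp add: power2_diff)
qed

abbreviation l2 :: "(nat list \<times> nat \<Rightarrow> complex) \<Rightarrow> bool" where
  "l2 x \<equiv> (\<lambda>k. (cmod (x k))\<^sup>2) summable_on UNIV"

lemma l2_diff:
  assumes "l2 x" "l2 z" shows "l2 (\<lambda>k. x k - z k)"
proof -
  have "(\<lambda>k. 2 * (cmod (x k))\<^sup>2 + 2 * (cmod (z k))\<^sup>2) summable_on UNIV"
    using assms by (intro summable_on_add summable_on_cmult_right)
  moreover have "(cmod (x k - z k))\<^sup>2 \<le> 2 * (cmod (x k))\<^sup>2 + 2 * (cmod (z k))\<^sup>2" for k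
  proof -
    have "cmod (x k - z k) \<le> cmod (x k) + cmod (z k)" by (rule norm_triangle_ineq4)
    hence "(cmod (x k - z k))\<^sup>2 \<le> (cmod (x k) + cmod (z k))\<^sup>2"
      by (simp add: power_mono)
    also have "\<dots> \<le> 2 * (cmod (x k))\<^sup>2 + 2 * (cmod (z k))\<^sup>2"
      by (rule t1)
    finally show ?thesis .
  qed
  ultimately show ?thesis
    by (rule summable_on_comparison_test) auto
qed

lemma l2_prod:
  assumes "l2 x" "l2 z" shows "(\<lambda>k. x k * cnj (z k)) summable_on UNIV"
proof (rule abs_summable_summable)
  have "(\<lambda>k. (cmod (x k))\<^sup>2 + (cmod (z k))\<^sup>2) summable_on UNIV"
    using assms by (intro summable_on_add)
  moreover have "norm (x k * cnj (z k)) \<le> (cmod (x k))\<^sup>2 + (cmod (z k))\<^sup>2" for k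
  proof -
    have "norm (x k * cnj (z k)) = cmod (x k) * cmod (z k)" by (simp add: norm_mult)
    also have "\<dots> \<le> (cmod (x k))\<^sup>2 + (cmod (z k))\<^sup>2"
      by (rule t2) auto
    finally show ?thesis .
  qed
  ultimately show "(\<lambda>k. norm (x k * cnj (z k))) summable_on UNIV"
    by (rule summable_on_comparison_test) auto
qed

lemma finner_diff1:
  assumes "l2 x" "l2 y" "l2 z"
  shows "finner (\<lambda>k. x k - y k) z = finner x z - finner y z"
proof -
  have s1: "(\<lambda>k. x k * cnj (z k)) summable_on UNIV" by (rule l2_prod[OF assms(1) assms(3)])
  have s2: "(\<lambda>k. - (y k * cnj (z k))) summable_on UNIV" using l2_prod[OF assms(2) assms(3)] by (simp only: summable_on_uminus)
  have "finner (\<lambda>k. x k - y k) z = infsum (\<lambda>k. x k * cnj (z k) + - (y k * cnj (z k))) UNIV"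
    unfolding finner_def by (simp add: algebra_simps)
  also have "\<dots> = finner x z + - finner y z"
    unfolding finner_def using infsum_add[OF s1 s2] by (simp add: infsum_uminus)
  finally show ?thesis by simp
qed

lemma finsupp:
  assumes "finite S" "\<And>k. k \<notin> S \<Longrightarrow> f k = 0"
  shows "infsum f UNIV = sum f S"
proof -
  have "infsum f UNIV = infsum f S"
    by (rule infsum_cong_neutral) (use assms in auto)
  thus ?thesis using assms by simp
qed

lemma fs_l2:
  assumes "finite {k. x k \<noteq> 0}" shows "l2 x"
  by (rule finite_nonzero_values_imp_summable_on) (rule finite_subset[OF _ assms], auto)

lemma finner_fin:
  assumes "finite S" "{k. x k \<noteq> 0} \<subseteq> S"
  shows "finner x z = (\<Sum>k\<in>S. x k * cnj (z k))"
  unfolding finner_def by (rule finsupp) (use assms in auto)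

lemma supp_sum: "{k. (\<Sum>i\<in>I. f i k) \<noteq> 0} \<subseteq> (\<Union>i\<in>I. {k. f i k \<noteq> 0})"
proof
  fix k assume k: "k \<in> {k. (\<Sum>i\<in>I. f i k) \<noteq> 0}"
  show "k \<in> (\<Union>i\<in>I. {k. f i k \<noteq> 0})"
  proof (rule ccontr)
    assume "k \<notin> (\<Union>i\<in>I. {k. f i k \<noteq> 0})"
    hence "\<forall>i\<in>I. f i k = 0" by blast
    hence "(\<Sum>i\<in>I. f i k) = 0" by simp
    thus False using k by simp
  qed
qed

lemma finner_sum:
  assumes "finite I" "\<And>i. i \<in> I \<Longrightarrow> finite {k. f i k \<noteq> 0}"
  shows "finner (\<lambda>k. \<Sum>i\<in>I. f i k) z = (\<Sum>i\<in>I. finner (f i) z)"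
proof -
  define S where "S = (\<Union>i\<in>I. {k. f i k \<noteq> 0})"
  have fS: "finite S" unfolding S_def using assms by auto
  have "finner (\<lambda>k. \<Sum>i\<in>I. f i k) z = (\<Sum>k\<in>S. (\<Sum>i\<in>I. f i k) * cnj (z k))"
  proof (rule finner_fin[OF fS])
    show "{k. (\<Sum>i\<in>I. f i k) \<noteq> 0} \<subseteq> S"
      unfolding S_def by (rule supp_sum)
  qed
  also have "\<dots> = (\<Sum>k\<in>S. \<Sum>i\<in>I. f i k * cnj (z k))"
    by (simp add: sum_distrib_right)
  also have "\<dots> = (\<Sum>i\<in>I. \<Sum>k\<in>S. f i k * cnj (z k))"
    by (rule sum.swap)
  also have "\<dots> = (\<Sum>i\<in>I. finner (f i) z)"
    by (rule sum.cong[OF refl], rule finner_fin[OF fS, symmetric]) (auto simp: S_def)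
  finally show ?thesis .
qed

lemma finner_fsdiff:
  assumes "finite {k. x k \<noteq> 0}" "finite {k. y k \<noteq> 0}"
  shows "finner (\<lambda>k. x k - y k) z = finner x z - finner y z"
proof -
  let ?S = "{k. x k \<noteq> 0} \<union> {k. y k \<noteq> 0}"
  have "finner (\<lambda>k. x k - y k) z = (\<Sum>k\<in>?S. (x k - y k) * cnj (z k))"
    by (rule finner_fin) (use assms in auto)
  also have "\<dots> = (\<Sum>k\<in>?S. x k * cnj (z k)) - (\<Sum>k\<in>?S. y k * cnj (z k))"
    by (simp add: algebra_simps sum_subtractf)
  also have "\<dots> = finner x z - finner y z"
    by (subst (1 2) finner_fin[where S="?S"]) (use assms in auto)
  finally show ?thesis .
qed

lemma finner_fsdiv:
  assumes "finite {k. x k \<noteq> 0}"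
  shows "finner (\<lambda>k. x k / c) z = finner x z / c"
proof -
  have "finner (\<lambda>k. x k / c) z = (\<Sum>k\<in>{k. x k \<noteq> 0}. (x k / c) * cnj (z k))"
    by (rule finner_fin) (use assms in auto)
  also have "\<dots> = (\<Sum>k\<in>{k. x k \<noteq> 0}. x k * cnj (z k)) / c"
    by (simp add: sum_divide_distrib)
  also have "\<dots> = finner x z / c"
    by (subst finner_fin[where S="{k. x k \<noteq> 0}"]) (use assms in auto)
  finally show ?thesis .
qed

lemma finner_bvec: "finner (bvec w j) z = cnj (z (w, j))"
  by (subst finner_fin[where S="{(w,j)}"]) (auto simp: bvec_def)

lemma fs_bvec: "finite {k. bvec w j k \<noteq> 0}"
  by (rule finite_subset[of _ "{(w,j)}"]) (auto simp: bvec_def)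

lemma fs_delta: "finite {k. delta_vac v k \<noteq> 0}"
proof (rule finite_subset)
  show "{k. delta_vac v k \<noteq> 0} \<subseteq> (\<Union>p\<in>{..<length v}. {k. bvec (drop (Suc p) v @ take p v) (v ! p) k \<noteq> 0})"
    unfolding delta_vac_def by (rule supp_sum)
  show "finite (\<Union>p\<in>{..<length v}. {k. bvec (drop (Suc p) v @ take p v) (v ! p) k \<noteq> 0})"
    using fs_bvec by blast
qed

lemma finner_delta:
  "finner (delta_vac a) z = (\<Sum>q<length a. cnj (z (drop (Suc q) a @ take q a, a ! q)))"
  unfolding delta_vac_def
  by (subst finner_sum) (simp_all add: fs_bvec finner_bvec)

definition cnt :: "nat list \<Rightarrow> nat list \<Rightarrow> nat" where
  "cnt a v = card {p. p < length v \<and> rotate p v = a}"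

lemma rot_eq:
  assumes "p < length v"
  shows "(rotate p v = j # w) = (drop (Suc p) v @ take p v = w \<and> v ! p = j)"
proof -
  have "rotate p v = drop p v @ take p v" using assms by (simp add: rotate_drop_take)
  also have "\<dots> = (v ! p # drop (Suc p) v) @ take p v"
    using assms by (simp add: Cons_nth_drop_Suc)
  finally show ?thesis by auto
qed

lemma rot_nth: "q < length a \<Longrightarrow> rotate q a = a ! q # (drop (Suc q) a @ take q a)"
  by (subst rot_eq) auto

lemma delta_eval: "delta_vac v (w, j) = of_nat (cnt (j # w) v)"
proof -
  have "delta_vac v (w, j) = (\<Sum>p<length v. if rotate p v = j # w then 1 else 0)"
    unfolding delta_vac_def bvec_def
    by (rule sum.cong[OF refl]) (auto simp: rot_eq)
  also have "\<dots> = of_nat (card {p\<in>{..<length v}. rotate p v = j # w})"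
    by (simp add: sum.If_cases Int_def)
  also have "{p\<in>{..<length v}. rotate p v = j # w} = {p. p < length v \<and> rotate p v = j # w}"
    by auto
  finally show ?thesis unfolding cnt_def by simp
qed

lemma rot_inv: "rotate (length b - r mod length b) (rotate r b) = b"
proof (cases "b = []")
  case False
  hence m: "length b > 0" by simp
  have "rotate (length b - r mod length b) (rotate r b) = rotate (length b - r mod length b + r) b"
    by (simp add: rotate_rotate)
  also have "(length b - r mod length b + r) mod length b = 0"
  proof -
    have "(length b - r mod length b + r) mod length b = (length b - r mod length b + r mod length b) mod length b"
      by (simp add: mod_add_right_eq)
    also have "\<dots> = 0" using m by simp
    finally show ?thesis .
  qed
  hence "rotate (length b - r mod length b + r) b = b"
    using rotate_conv_mod[of "length b - r mod length b + r" b] by simp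
  finally show ?thesis .
qed simp

lemma cnt_rot_le: "cnt (rotate r b) v \<le> cnt b v"
proof (cases "length b = length v \<and> v \<noteq> []")
  case True
  define m where "m = length v"
  define s where "s = length b - r mod length b"
  have m: "m > 0" using True m_def by simp
  define f where "f p = (s + p) mod m" for p
  show ?thesis unfolding cnt_def
  proof (rule card_inj_on_le)
    show "inj_on f {p. p < length v \<and> rotate p v = rotate r b}"
    proof (rule inj_onI)
      fix p p' assume "p \<in> {p. p < length v \<and> rotate p v = rotate r b}"
        "p' \<in> {p. p < length v \<and> rotate p v = rotate r b}" and fe: "f p = f p'"
      hence pm: "p < m" "p' < m" unfolding m_def by auto
      define t where "t = s mod m"
      have t: "t < m" unfolding t_def using m by simp
      have e: "f q = (if t + q < m then t + q else t + q - m)" if "q < m" for q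
      proof -
        have "f q = (t + q) mod m" unfolding f_def t_def by (simp add: mod_add_left_eq)
        also have "\<dots> = (if t + q < m then t + q else t + q - m)"
        proof (cases "t + q < m")
          case False
          hence "(t + q) mod m = (t + q - m) mod m" by (simp add: le_mod_geq)
          also have "\<dots> = t + q - m" using t that by simp
          finally show ?thesis using False by simp
        qed simp
        finally show ?thesis .
      qed
      show "p = p'" using fe e[OF pm(1)] e[OF pm(2)] t pm by (auto split: if_splits)
    qed
    show "f ` {p. p < length v \<and> rotate p v = rotate r b} \<subseteq> {p. p < length v \<and> rotate p v = b}"
    proof
      fix x assume "x \<in> f ` {p. p < length v \<and> rotate p v = rotate r b}"
      then obtain p where p: "p < length v" "rotate p v = rotate r b" and x: "x = f p" by auto
      have "rotate x v = rotate (s + p) v" unfolding x f_def m_def using rotate_conv_mod[of "s + p" v] by simp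
      also have "\<dots> = rotate s (rotate p v)" by (simp add: rotate_rotate)
      also have "\<dots> = b" using p(2) rot_inv s_def by simp
      finally show "x \<in> {p. p < length v \<and> rotate p v = b}" using m m_def x f_def by auto
    qed
  qed auto
next
  case False
  have E: "{p. p < length v \<and> rotate p v = rotate r b} = {}"
  proof -
    { fix p assume "p < length v" "rotate p v = rotate r b"
      hence "length v = length b" "v \<noteq> []" by (metis length_rotate, auto)
      hence False using False by simp }
    thus ?thesis by blast
  qed
  show ?thesis unfolding cnt_def E by simp
qed

lemma cnt_rot: "cnt (rotate r b) v = cnt b v"
proof -
  have "cnt b v = cnt (rotate (length b - r mod length b) (rotate r b)) v" by (simp add: rot_inv)
  also have "\<dots> \<le> cnt (rotate r b) v" by (rule cnt_rot_le)
  finally show ?thesis using cnt_rot_le[of r b v] by simp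
qed


lemma fs_diff: "finite {k. x k \<noteq> 0} \<Longrightarrow> finite {k. y k \<noteq> 0} \<Longrightarrow> finite {k. x k - y k \<noteq> (0::complex)}"
  by (rule finite_subset[of _ "{k. x k \<noteq> 0} \<union> {k. y k \<noteq> 0}"]) auto

lemma fs_div: "finite {k. x k \<noteq> 0} \<Longrightarrow> finite {k. x k / c \<noteq> (0::complex)}"
  by (rule finite_subset[of _ "{k. x k \<noteq> 0}"]) auto

lemma fs_sum: "finite I \<Longrightarrow> (\<And>i. i \<in> I \<Longrightarrow> finite {k. f i k \<noteq> 0}) \<Longrightarrow> finite {k. (\<Sum>i\<in>I. f i k) \<noteq> (0::complex)}"
  by (rule finite_subset[OF supp_sum]) auto

lemma fin_delta_self: "finner (delta_vac a) (delta_vac v) = of_nat (length a * cnt a v)"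
proof -
  have "finner (delta_vac a) (delta_vac v) = (\<Sum>q<length a. of_nat (cnt (rotate q a) v))"
    unfolding finner_delta
    by (rule sum.cong[OF refl]) (simp add: delta_eval rot_nth)
  also have "\<dots> = (\<Sum>q<length a. of_nat (cnt a v))" by (simp add: cnt_rot)
  finally show ?thesis by simp
qed

lemma orth_Y:
  "finner (\<lambda>k. \<Sum>j\<in>J. bvec (u j) j k - delta_vac (j # u j) k / of_nat (length (u j) + 1)) (delta_vac v) = 0"
proof (cases "finite J")
  case True
  have "finner (\<lambda>k. \<Sum>j\<in>J. bvec (u j) j k - delta_vac (j # u j) k / of_nat (length (u j) + 1)) (delta_vac v)
     = (\<Sum>j\<in>J. finner (\<lambda>k. bvec (u j) j k - delta_vac (j # u j) k / of_nat (length (u j) + 1)) (delta_vac v))"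
    by (rule finner_sum[OF True]) (intro fs_diff fs_bvec fs_div fs_delta)
  also have "\<dots> = (\<Sum>j\<in>J. 0)"
  proof (rule sum.cong[OF refl])
    fix j assume "j \<in> J"
    have "finner (\<lambda>k. bvec (u j) j k - delta_vac (j # u j) k / of_nat (length (u j) + 1)) (delta_vac v)
        = finner (bvec (u j) j) (delta_vac v) - finner (delta_vac (j # u j)) (delta_vac v) / of_nat (length (u j) + 1)"
      by (subst finner_fsdiff) (simp_all add: fs_bvec fs_div fs_delta finner_fsdiv)
    also have "\<dots> = of_nat (cnt (j # u j) v) - of_nat (Suc (length (u j)) * cnt (j # u j) v) / of_nat (Suc (length (u j)))"
      unfolding finner_bvec fin_delta_self delta_eval by simp
    also have "of_nat (Suc (length (u j)) * cnt (j # u j) v) / of_nat (Suc (length (u j))) = (of_nat (cnt (j # u j) v) :: complex)"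
    proof -
      have m: "(of_nat (Suc (length (u j))) :: complex) \<noteq> 0" by (rule of_nat_neq_0)
      show ?thesis by (simp only: of_nat_mult) (rule nonzero_mult_div_cancel_left[OF m])
    qed
    also have "of_nat (cnt (j # u j) v) - of_nat (cnt (j # u j) v) = (0::complex)" by simp
    finally show "finner (\<lambda>k. bvec (u j) j k - delta_vac (j # u j) k / of_nat (length (u j) + 1)) (delta_vac v) = 0" .
  qed
  finally show ?thesis by simp
next
  case False
  thus ?thesis unfolding finner_def by simp
qed

lemma delta_supp:
  assumes "delta_vac a k \<noteq> 0" shows "set (fst k) \<subseteq> set a \<and> snd k \<in> set a"
proof -
  have sub: "{k. delta_vac a k \<noteq> 0} \<subseteq> (\<Union>p\<in>{..<length a}. {k. bvec (drop (Suc p) a @ take p a) (a ! p) k \<noteq> 0})"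
    unfolding delta_vac_def by (rule supp_sum)
  have "k \<in> {k. delta_vac a k \<noteq> 0}" using assms by simp
  hence "k \<in> (\<Union>p\<in>{..<length a}. {k. bvec (drop (Suc p) a @ take p a) (a ! p) k \<noteq> 0})"
    by (rule subsetD[OF sub])
  then obtain p where p: "p < length a" "bvec (drop (Suc p) a @ take p a) (a ! p) k \<noteq> 0"
    by auto
  hence k: "k = (drop (Suc p) a @ take p a, a ! p)" by (simp add: bvec_def split: if_splits)
  have "set (drop (Suc p) a) \<subseteq> set a" by (rule set_drop_subset)
  moreover have "set (take p a) \<subseteq> set a" by (rule set_take_subset)
  moreover have "a ! p \<in> set a" by (rule nth_mem[OF p(1)])
  ultimately show ?thesis unfolding k by simp
qed

lemma valid_delta:
  assumes "is_word n (u j)" "j \<in> {1..n}" "delta_vac (j # u j) k \<noteq> 0"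
  shows "valid_idx n k"
  using delta_supp[OF assms(3)] assms(1,2) unfolding valid_idx_def is_word_def by auto

lemma valid_bvec:
  assumes "is_word n (u j)" "j \<in> {1..n}" "bvec (u j) j k \<noteq> 0"
  shows "valid_idx n k"
  using assms unfolding valid_idx_def is_word_def bvec_def by (auto split: if_splits)

lemma pt_le:
  assumes "l2 w" shows "cmod (w k) \<le> fnorm w"
proof -
  have "sum (\<lambda>k. (cmod (w k))\<^sup>2) {k} \<le> infsum (\<lambda>k. (cmod (w k))\<^sup>2) UNIV"
    by (rule finite_sum_le_infsum[OF assms]) auto
  hence "(cmod (w k))\<^sup>2 \<le> infsum (\<lambda>k. (cmod (w k))\<^sup>2) UNIV" by simp
  hence "sqrt ((cmod (w k))\<^sup>2) \<le> fnorm w" unfolding fnorm_def by (rule real_sqrt_le_mono)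
  thus ?thesis by simp
qed

lemma self_zero:
  assumes "l2 d" "finner d d = 0" shows "d k = 0"
proof -
  have s: "(\<lambda>k. d k * cnj (d k)) summable_on UNIV" by (rule l2_prod[OF assms(1) assms(1)])
  have re: "Re (x * cnj x) = (cmod x)\<^sup>2" for x :: complex
    unfolding cmod_power2 by (simp add: power2_eq_square)
  have "infsum (\<lambda>k. (cmod (d k))\<^sup>2) UNIV = Re (finner d d)"
    unfolding finner_def using infsum_Re[OF s] re by simp
  hence z: "infsum (\<lambda>k. (cmod (d k))\<^sup>2) UNIV = 0" using assms(2) by simp
  have "sum (\<lambda>k. (cmod (d k))\<^sup>2) {k} \<le> infsum (\<lambda>k. (cmod (d k))\<^sup>2) UNIV"
    by (rule finite_sum_le_infsum[OF assms(1)]) auto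
  hence "(cmod (d k))\<^sup>2 \<le> 0" using z by simp
  thus ?thesis by simp
qed

lemma span_fs:
  assumes "z \<in> delta_span n" shows "finite {k. z k \<noteq> 0}"
proof -
  obtain U c where U: "finite U" "z = (\<lambda>k. \<Sum>u\<in>U. c u * delta_vac u k)"
    using assms unfolding delta_span_def by blast
  have "finite {k. (\<Sum>u\<in>U. c u * delta_vac u k) \<noteq> 0}"
    by (rule fs_sum[OF U(1)], rule finite_subset[OF _ fs_delta]) auto
  thus ?thesis using U(2) by simp
qed
lemma Yspan_lem:
  assumes fsY: "finite {k. Y k \<noteq> 0}" and oY: "\<And>v. finner Y (delta_vac v) = 0"
    and zs: "z \<in> delta_span n"
  shows "finner Y z = 0"
  proof -
    obtain U c where U: "finite U" "z = (\<lambda>k. \<Sum>u\<in>U. c u * delta_vac u k)"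
      using zs unfolding delta_span_def by blast
    let ?S = "{k. Y k \<noteq> 0}"
    have "finner Y z = (\<Sum>k\<in>?S. Y k * cnj (\<Sum>w\<in>U. c w * delta_vac w k))"
      unfolding U(2) by (rule finner_fin[OF fsY]) simp
    also have "\<dots> = (\<Sum>k\<in>?S. \<Sum>w\<in>U. cnj (c w) * (Y k * cnj (delta_vac w k)))"
      by (rule sum.cong[OF refl]) (simp add: sum_distrib_left cnj_sum mult.assoc mult.left_commute)
    also have "\<dots> = (\<Sum>w\<in>U. \<Sum>k\<in>?S. cnj (c w) * (Y k * cnj (delta_vac w k)))"
      by (rule sum.swap)
    also have "\<dots> = (\<Sum>w\<in>U. cnj (c w) * finner Y (delta_vac w))"
    proof (rule sum.cong[OF refl])
      fix w
      have "finner Y (delta_vac w) = (\<Sum>k\<in>?S. Y k * cnj (delta_vac w k))"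
        by (rule finner_fin[OF fsY]) simp
      thus "(\<Sum>k\<in>?S. cnj (c w) * (Y k * cnj (delta_vac w k))) = cnj (c w) * finner Y (delta_vac w)"
        by (simp add: sum_distrib_left)
    qed
    also have "\<dots> = 0" by (simp add: oY)
    finally show ?thesis .
  qed

lemma Dcl_lem: assumes Df: "Dv \<in> fockn n" and Dspan: "Dv \<in> delta_span n"
  shows "Dv \<in> fclosure n (delta_span n)"
  proof -
    have f0: "fnorm (\<lambda>k. Dv k - Dv k) = 0" by (simp add: fnorm_def)
    have "\<forall>\<epsilon>>0. \<exists>z\<in>delta_span n. fnorm (\<lambda>k. Dv k - z k) < \<epsilon>"
    proof (intro allI impI)
      fix e :: real assume e: "e > 0"
      have "fnorm (\<lambda>k. Dv k - Dv k) < e" using f0 e by simp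
      thus "\<exists>z\<in>delta_span n. fnorm (\<lambda>k. Dv k - z k) < e" by (rule bexI[OF _ Dspan])
    qed
    with Df show ?thesis unfolding fclosure_def mem_Collect_eq by (rule conjI)
  qed

theorem corollary3p5:
  fixes n :: nat and u :: "nat \<Rightarrow> nat list"
  assumes "\<forall>j\<in>{1..n}. is_word n (u j)"
  shows "leray n (\<lambda>k. \<Sum>j=1..n. bvec (u j) j k) =
         (\<lambda>k. \<Sum>j=1..n. bvec (u j) j k
                 - delta_vac (j # u j) k / of_nat (length (u j) + 1))"
proof -
  define X where "X = (\<lambda>k. \<Sum>j=1..n. bvec (u j) j k)"
  define Y where "Y = (\<lambda>k. \<Sum>j=1..n. bvec (u j) j k - delta_vac (j # u j) k / of_nat (length (u j) + 1))"
  define Dv where "Dv = (\<lambda>k. \<Sum>j=1..n. delta_vac (j # u j) k / of_nat (length (u j) + 1))"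
  define V where "V = orth_compl n (fclosure n (delta_span n))"
  have XY: "(\<lambda>k. X k - Y k) = Dv" unfolding X_def Y_def Dv_def by (simp add: sum_subtractf)
  have fsX: "finite {k. X k \<noteq> 0}" unfolding X_def by (intro fs_sum fs_bvec) simp
  have fsY: "finite {k. Y k \<noteq> 0}" unfolding Y_def by (intro fs_sum fs_diff fs_bvec fs_div fs_delta) simp
  have fsD: "finite {k. Dv k \<noteq> 0}" unfolding Dv_def by (intro fs_sum fs_div fs_delta) simp
  have vY: "valid_idx n k" if "Y k \<noteq> 0" for k
  proof -
    have "k \<in> {k. Y k \<noteq> 0}" using that by simp
    hence "k \<in> (\<Union>j\<in>{1..n}. {k. bvec (u j) j k - delta_vac (j # u j) k / of_nat (length (u j) + 1) \<noteq> 0})"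
      unfolding Y_def by (rule subsetD[OF supp_sum])
    then obtain j where j: "j \<in> {1..n}" "bvec (u j) j k - delta_vac (j # u j) k / of_nat (length (u j) + 1) \<noteq> 0"
      by blast
    hence "bvec (u j) j k \<noteq> 0 \<or> delta_vac (j # u j) k \<noteq> 0" by auto
    thus ?thesis using valid_bvec[of n u j k] valid_delta[of n u j k] j(1) assms by blast
  qed
  have vD: "valid_idx n k" if "Dv k \<noteq> 0" for k
  proof -
    have "k \<in> {k. Dv k \<noteq> 0}" using that by simp
    hence "k \<in> (\<Union>j\<in>{1..n}. {k. delta_vac (j # u j) k / of_nat (length (u j) + 1) \<noteq> 0})"
      unfolding Dv_def by (rule subsetD[OF supp_sum])
    then obtain j where j: "j \<in> {1..n}" "delta_vac (j # u j) k / of_nat (length (u j) + 1) \<noteq> 0"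
      by blast
    hence "delta_vac (j # u j) k \<noteq> 0" by auto
    thus ?thesis using valid_delta[of n u j k] j(1) assms by blast
  qed
  have Yf: "Y \<in> fockn n" unfolding fockn_def using vY fs_l2[OF fsY] by blast
  have Df: "Dv \<in> fockn n" unfolding fockn_def using vD fs_l2[OF fsD] by blast
  have Dspan: "Dv \<in> delta_span n"
  proof -
    define U where "U = (\<lambda>j. j # u j) ` {1..n}"
    define c where "c = (\<lambda>w::nat list. inverse (of_nat (length w) :: complex))"
    have inj: "inj_on (\<lambda>j. j # u j) {1..n}" by (auto simp: inj_on_def)
    have "(\<lambda>k. \<Sum>w\<in>U. c w * delta_vac w k) = Dv"
      unfolding U_def Dv_def
    proof (rule ext)
      fix k
      show "(\<Sum>w\<in>(\<lambda>j. j # u j) ` {1..n}. c w * delta_vac w k) =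
            (\<Sum>j = 1..n. delta_vac (j # u j) k / of_nat (length (u j) + 1))"
        by (subst sum.reindex[OF inj]) (simp add: c_def divide_inverse mult.commute)
    qed
    moreover have "finite U" unfolding U_def by simp
    moreover have "\<forall>w\<in>U. is_word n w" unfolding U_def using assms by (auto simp: is_word_def)
    ultimately show ?thesis unfolding delta_span_def by blast
  qed
  have Dcl: "Dv \<in> fclosure n (delta_span n)" by (rule Dcl_lem[OF Df Dspan])
  have oY: "finner Y (delta_vac v) = 0" for v unfolding Y_def by (rule orth_Y)
  have Yspan: "finner Y z = 0" if "z \<in> delta_span n" for z
    using that by (rule Yspan_lem[OF fsY oY])
  have Ycl: "finner Y z = 0" if z: "z \<in> fclosure n (delta_span n)" for z
  proof (rule ccontr)
    assume ne: "finner Y z \<noteq> 0"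
    let ?S = "{k. Y k \<noteq> 0}"
    define C where "C = (\<Sum>k\<in>?S. cmod (Y k))"
    have C0: "C \<ge> 0" unfolding C_def by (simp add: sum_nonneg)
    define e where "e = cmod (finner Y z) / (C + 1)"
    have e0: "e > 0" unfolding e_def using ne C0 by simp
    have l2z: "l2 z" using z unfolding fclosure_def fockn_def by blast
    obtain z' where z': "z' \<in> delta_span n" "fnorm (\<lambda>k. z k - z' k) < e"
      using z e0 unfolding fclosure_def by blast
    define w where "w = (\<lambda>k. z k - z' k)"
    have l2w: "l2 w" unfolding w_def by (rule l2_diff[OF l2z fs_l2[OF span_fs[OF z'(1)]]])
    have "finner Y z = (\<Sum>k\<in>?S. Y k * cnj (z k))" by (rule finner_fin[OF fsY]) simp
    also have "\<dots> = (\<Sum>k\<in>?S. Y k * cnj (w k) + Y k * cnj (z' k))"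
      by (rule sum.cong[OF refl]) (simp add: w_def algebra_simps)
    also have "\<dots> = finner Y w + finner Y z'"
      by (simp add: sum.distrib finner_fin[OF fsY])
    finally have "finner Y z = finner Y w" using Yspan[OF z'(1)] by simp
    also have "finner Y w = (\<Sum>k\<in>?S. Y k * cnj (w k))" by (rule finner_fin[OF fsY]) simp
    finally have eq: "finner Y z = (\<Sum>k\<in>?S. Y k * cnj (w k))" .
    have "cmod (finner Y z) \<le> (\<Sum>k\<in>?S. cmod (Y k) * fnorm w)"
      unfolding eq
    proof (rule sum_norm_le)
      fix k
      have "cmod (Y k * cnj (w k)) = cmod (Y k) * cmod (w k)" by (simp add: norm_mult)
      also have "\<dots> \<le> cmod (Y k) * fnorm w" by (rule mult_left_mono[OF pt_le[OF l2w]]) simp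
      finally show "cmod (Y k * cnj (w k)) \<le> cmod (Y k) * fnorm w" .
    qed
    also have "\<dots> = C * fnorm w" unfolding C_def by (simp add: sum_distrib_right)
    also have "\<dots> \<le> C * e" using z'(2) C0 unfolding w_def by (intro mult_left_mono) auto
    also have "\<dots> < (C + 1) * e" using e0 by simp
    also have "\<dots> = cmod (finner Y z)" unfolding e_def using C0 by simp
    finally show False by simp
  qed
  have YV: "Y \<in> V" unfolding V_def orth_compl_def using Yf Ycl by blast
  have XYV: "finner (\<lambda>k. X k - Y k) v = 0" if v: "v \<in> V" for v
  proof -
    let ?S = "{k. Dv k \<noteq> 0}"
    have "finner v Dv = 0" using v Dcl unfolding V_def orth_compl_def by blast
    have A: "finner v Dv = (\<Sum>k\<in>?S. v k * cnj (Dv k))"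
      unfolding finner_def by (rule finsupp[OF fsD]) simp
    have B: "finner Dv v = (\<Sum>k\<in>?S. Dv k * cnj (v k))" by (rule finner_fin[OF fsD]) simp
    have C: "cnj (\<Sum>k\<in>?S. v k * cnj (Dv k)) = (\<Sum>k\<in>?S. Dv k * cnj (v k))"
      by (simp add: cnj_sum mult.commute)
    have "finner Dv v = cnj (finner v Dv)" unfolding A B C ..
    thus ?thesis unfolding XY using \<open>finner v Dv = 0\<close> by simp
  qed
  have uniq: "y = Y" if y: "y \<in> V \<and> (\<forall>v\<in>V. finner (\<lambda>k. X k - y k) v = 0)" for y
  proof -
    have yf: "y \<in> fockn n" using y unfolding V_def orth_compl_def by blast
    have l2y: "l2 y" using yf unfolding fockn_def by blast
    have l2Y: "l2 Y" by (rule fs_l2[OF fsY])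
    have l2X: "l2 X" by (rule fs_l2[OF fsX])
    define d where "d = (\<lambda>k. Y k - y k)"
    have l2d: "l2 d" unfolding d_def by (rule l2_diff[OF l2Y l2y])
    have dV: "d \<in> V"
    proof -
      have "valid_idx n k" if "d k \<noteq> 0" for k
      proof -
        have "Y k \<noteq> 0 \<or> y k \<noteq> 0" using that unfolding d_def by auto
        thus ?thesis using vY yf unfolding fockn_def by blast
      qed
      hence "d \<in> fockn n" unfolding fockn_def using l2d by blast
      moreover have "finner d z = 0" if z: "z \<in> fclosure n (delta_span n)" for z
      proof -
        have l2z: "l2 z" using z unfolding fclosure_def fockn_def by blast
        have "finner d z = finner Y z - finner y z" unfolding d_def by (rule finner_diff1[OF l2Y l2y l2z])
        moreover have "finner y z = 0" using y z unfolding V_def orth_compl_def by blast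
        ultimately show ?thesis using Ycl[OF z] by simp
      qed
      ultimately show ?thesis unfolding V_def orth_compl_def by blast
    qed
    have h1: "finner (\<lambda>k. X k - y k) d = 0" using y dV by blast
    have h2: "finner (\<lambda>k. X k - Y k) d = 0" using XYV[OF dV] .
    have "finner (\<lambda>k. (X k - y k) - (X k - Y k)) d = finner (\<lambda>k. X k - y k) d - finner (\<lambda>k. X k - Y k) d"
      by (rule finner_diff1[OF l2_diff[OF l2X l2y] l2_diff[OF l2X l2Y] l2d])
    moreover have "(\<lambda>k. (X k - y k) - (X k - Y k)) = d" unfolding d_def by (simp add: algebra_simps)
    ultimately have "finner d d = 0" using h1 h2 by simp
    hence "\<And>k. d k = 0" using self_zero[OF l2d] by blast
    thus "y = Y" unfolding d_def by (simp add: fun_eq_iff)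
  qed
  have "leray n X = Y"
    unfolding leray_def orth_proj_def V_def[symmetric]
  proof (rule the_equality)
    show "Y \<in> V \<and> (\<forall>v\<in>V. finner (\<lambda>k. X k - Y k) v = 0)"
      using YV XYV by blast
    fix y assume "y \<in> V \<and> (\<forall>v\<in>V. finner (\<lambda>k. X k - y k) v = 0)"
    thus "y = Y" by (rule uniq)
  qed
  thus ?thesis unfolding X_def Y_def .
qed

end
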